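(* Let ${\bf u}:D_1\to\mathbb{C}^2$ be the map of the General Construction with $r_n=2^{-n+1}$ (so $r_1=1$), $p(n)=n$, and $F(n)=2^{n^2/2}$. Then ${\bf u}$ is smooth on $D_1$, vanishes to infinite order at the origin ($\|z^{-k}{\bf u}(z)\|\to 0$ as $z\to 0$ for every $k\ge 0$), ${\bf u}_z(z)\ne 0$ for $z\ne 0$, and there is a constant $C_1>0$ such that $$\frac{\|{\bf u}_{\bar z}(z)\|}{\|{\bf u}_z(z)\|}\le \frac{C_1}{-\log_2|z|}\quad\text{for all } z\in D_1\setminus\{0\}.$$
   Context: General Construction. Fix a smooth function $s:\mathbb{R}\to\mathbb{R}$ with $s\equiv 0$ on $[0,\tfrac14]$, $s$ increasing on $[\tfrac14,\tfrac34]$, $s(\tfrac12)=\tfrac12$, $s'(\tfrac12)=2$, $s''(\tfrac12)=0$, and $s\equiv 1$ on $[\tfrac34,1]$. Let $(r_n)_{n\ge 1}$ be a strictly decreasing sequence of positive reals with limit $0$, put $\Delta r_n=r_n-r_{n+1}$, let $D_{r_1}=\{|z|<r_1\}$, and let $A_n=\{z\in\mathbb{C}: r_{n+1}\le |z|\le r_n\}$. Define $\chi_n(z)=s\!\left(\frac{|z|-r_{n+1}}{\Delta r_n}\right)$ on $A_n$. Let $p(n)$ ($n\ge 0$) be an increasing sequence of nonnegative integers and $F(n)$ ($n\ge 0$) positive reals. Define ${\bf u}=(u^1,u^2):D_{r_1}\to\mathbb{C}^2$ by ${\bf u}(0)=(0,0)$ and, on $A_n$ with $n$ even, $u^1(z)=F(n)z^{p(n)}$,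 $u^2(z)=\chi_n(z)F(n-1)z^{p(n-1)}+(1-\chi_n(z))F(n+1)z^{p(n+1)}$; on $A_n$ with $n$ odd, the same formulas with the roles of $u^1$ and $u^2$ interchanged. ${\bf u}_z=(u^1_z,u^2_z)$, ${\bf u}_{\bar z}=(u^1_{\bar z},u^2_{\bar z})$ with $\partial_z=\frac12(\partial_x-i\partial_y)$, $\partial_{\bar z}=\frac12(\partial_x+i\partial_y)$; $\|\cdot\|$ is the Euclidean norm on $\mathbb{C}^2$. *)

theory Defs
  imports "HOL-Analysis.Analysis"
begin

fun Ck_on :: "nat \<Rightarrow> 'a::real_normed_vector set \<Rightarrow> ('a \<Rightarrow> 'b::real_normed_vector) \<Rightarrow> bool" where
  "Ck_on 0 S f = continuous_on S f"
| "Ck_on (Suc k) S f =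
     (\<exists>f'. (\<forall>x\<in>S. (f has_derivative f' x) (at x)) \<and> (\<forall>v. Ck_on k S (\<lambda>x. f' x v)))"

definition smooth_on :: "'a::real_normed_vector set \<Rightarrow> ('a \<Rightarrow> 'b::real_normed_vector) \<Rightarrow> bool" where
  "smooth_on S f \<longleftrightarrow> (\<forall>k. Ck_on k S f)"

text \<open>Wirtinger derivatives, d/dz = (d/dx - i d/dy)/2, d/dzbar = (d/dx + i d/dy)/2,
  of a function C -> C (C viewed as R^2), via the real Frechet derivative.\<close>
definition dz :: "(complex \<Rightarrow> complex) \<Rightarrow> complex \<Rightarrow> complex" where
  "dz f z = (frechet_derivative f (at z) 1 - \<i> * frechet_derivative f (at z) \<i>) / 2"

definition dzbar :: "(complex \<Rightarrow> complex) \<Rightarrow> complex \<Rightarrow> complex" where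
  "dzbar f z = (frechet_derivative f (at z) 1 + \<i> * frechet_derivative f (at z) \<i>) / 2"

text \<open>Componentwise for maps C -> C^2 (C^2 = complex \<times> complex, whose norm is Euclidean).\<close>
definition uz :: "(complex \<Rightarrow> complex \<times> complex) \<Rightarrow> complex \<Rightarrow> complex \<times> complex" where
  "uz u z = (dz (\<lambda>w. fst (u w)) z, dz (\<lambda>w. snd (u w)) z)"

definition uzbar :: "(complex \<Rightarrow> complex \<times> complex) \<Rightarrow> complex \<Rightarrow> complex \<times> complex" where
  "uzbar u z = (dzbar (\<lambda>w. fst (u w)) z, dzbar (\<lambda>w. snd (u w)) z)"

text \<open>Index n of the annulus A_n = {r_(n+1) \<le> |z| \<le> r_n} containing z (n \<ge> 1);
  on the common circle |z| = r_n the two defining formulas agree, so we pick the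
  half-open annulus r_(n+1) \<le> |z| < r_n.\<close>
definition annulus_idx :: "(nat \<Rightarrow> real) \<Rightarrow> complex \<Rightarrow> nat" where
  "annulus_idx r z = (LEAST n. 1 \<le> n \<and> r (Suc n) \<le> cmod z)"

definition gc_u :: "(real \<Rightarrow> real) \<Rightarrow> (nat \<Rightarrow> real) \<Rightarrow> (nat \<Rightarrow> nat) \<Rightarrow> (nat \<Rightarrow> real)
                    \<Rightarrow> complex \<Rightarrow> complex \<times> complex" where
  "gc_u s r p F z =
     (if z = 0 then (0, 0) else
      (let n = annulus_idx r z;
           chi = s ((cmod z - r (Suc n)) / (r n - r (Suc n)));
           a = complex_of_real (F n) * z ^ p n;
           b = complex_of_real chi * complex_of_real (F (n - 1)) * z ^ p (n - 1)
               + complex_of_real (1 - chi) * complex_of_real (F (Suc n)) * z ^ p (Suc n)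
       in if even n then (a, b) else (b, a)))"

end

theory Submission
  imports Defs "HOL-Real_Asymp.Real_Asymp"
begin


lemma Ck_on_Suc_real_UNIV:
  fixes f :: "real \<Rightarrow> real"
  assumes "Ck_on (Suc k) UNIV f"
  shows "(\<forall>x. (f has_real_derivative deriv f x) (at x)) \<and> Ck_on k UNIV (deriv f)"
proof -
  from assms obtain f' where d: "\<And>x. (f has_derivative f' x) (at x)" and c: "\<And>v. Ck_on k UNIV (\<lambda>x. f' x v)"
    by auto
  have lin: "f' x v = f' x 1 * v" for x v
  proof -
    have "linear (f' x)" using d has_derivative_linear by blast
    then have "f' x (v *\<^sub>R 1) = v *\<^sub>R f' x 1" using linear_scale by blast
    then show ?thesis by simp
  qed
  have D: "(f has_real_derivative f' x 1) (at x)" for x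
    by (rule has_derivative_imp_has_field_derivative[OF d]) (metis lin mult.commute)
  then have e: "deriv f x = f' x 1" for x by (rule DERIV_imp_deriv)
  have "deriv f = (\<lambda>x. f' x 1)" using e by auto
  with c D e show ?thesis by auto
qed

lemma smooth_deriv:
  fixes f :: "real \<Rightarrow> real"
  assumes "smooth_on UNIV f"
  shows "(\<forall>x. (f has_real_derivative deriv f x) (at x)) \<and> smooth_on UNIV (deriv f)"
  using assms Ck_on_Suc_real_UNIV unfolding smooth_on_def by blast


definition sd :: "(real \<Rightarrow> real) \<Rightarrow> nat \<Rightarrow> real \<Rightarrow> real" where
  "sd s j = (deriv ^^ j) s"

lemma sd_props:
  assumes "smooth_on UNIV s"
  shows "smooth_on UNIV (sd s j) \<and> (\<forall>x. (sd s j has_real_derivative sd s (Suc j) x) (at x))"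
proof (induction j)
  case 0
  then show ?case using smooth_deriv[OF assms] by (simp add: sd_def assms)
next
  case (Suc j)
  then have "smooth_on UNIV (sd s (Suc j))" using smooth_deriv by (simp add: sd_def)
  then show ?case using smooth_deriv[of "sd s (Suc j)"] by (simp add: sd_def)
qed

lemma const_deriv_zero:
  fixes f :: "real \<Rightarrow> real"
  assumes "(f has_real_derivative D) (at x)" "open S" "x \<in> S" "\<And>y. y \<in> S \<Longrightarrow> f y = c"
  shows "D = 0"
proof -
  have "((\<lambda>y. c) has_real_derivative 0) (at x)" by simp
  then have "(f has_real_derivative 0) (at x)"
    by (rule has_field_derivative_transform_within_open[OF _ assms(2,3)]) (simp add: assms(4))
  then show ?thesis using assms(1) DERIV_unique by blast
qed

lemma sd_zero:
  assumes "smooth_on UNIV s" "\<forall>x\<in>{0..1/4}. s x = 0"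
  shows "\<forall>x\<in>{0<..<1/4}. sd s j x = 0"
proof (induction j)
  case 0 then show ?case using assms(2) by (simp add: sd_def)
next
  case (Suc j)
  show ?case
  proof
    fix x :: real assume x: "x \<in> {0<..<1/4}"
    show "sd s (Suc j) x = 0"
      using const_deriv_zero[of "sd s j" "sd s (Suc j) x" x "{0<..<1/4}" 0] sd_props[OF assms(1)] x Suc
      by auto
  qed
qed

lemma sd_one:
  assumes "smooth_on UNIV s" "\<forall>x\<in>{3/4..1}. s x = 1"
  shows "\<forall>x\<in>{3/4<..<1}. sd s j x = (if j = 0 then 1 else 0)"
proof (induction j)
  case 0 then show ?case using assms(2) by (simp add: sd_def)
next
  case (Suc j)
  show ?case
  proof
    fix x :: real assume x: "x \<in> {3/4<..<1}"
    show "sd s (Suc j) x = (if Suc j = 0 then 1 else 0)"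
      using const_deriv_zero[of "sd s j" "sd s (Suc j) x" x "{3/4<..<1}" "if j = 0 then 1 else 0"] sd_props[OF assms(1)] x Suc
      by auto
  qed
qed

definition sig :: "(real \<Rightarrow> real) \<Rightarrow> nat \<Rightarrow> real \<Rightarrow> real" where
  "sig s j x = (if x \<le> 1 then 0 else if 2 \<le> x then (if j = 0 then 1 else 0) else sd s j (x - 1))"

definition kap :: "(real \<Rightarrow> real) \<Rightarrow> nat \<Rightarrow> real \<Rightarrow> real" where
  "kap s j x = 2^j * sig s j (2*x) - (1/2)^j * sig s j (x/2)"

locale sfun =
  fixes s :: "real \<Rightarrow> real"
  assumes s_smooth: "smooth_on UNIV s"
    and s_zero: "\<forall>x\<in>{0..1/4}. s x = 0"
    and s_one: "\<forall>x\<in>{3/4..1}. s x = 1"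
begin

lemma sig_low: "x < 5/4 \<Longrightarrow> sig s j x = 0"
  using sd_zero[OF s_smooth s_zero, of j] by (auto simp: sig_def)

lemma sig_high: "x > 7/4 \<Longrightarrow> sig s j x = (if j = 0 then 1 else 0)"
  using sd_one[OF s_smooth s_one, of j] by (auto simp: sig_def)

lemma sig_deriv: "(sig s j has_real_derivative sig s (Suc j) x) (at x)"
proof -
  consider "x < 5/4" | "1 < x \<and> x < 2" | "x > 7/4" by linarith
  then show ?thesis
  proof cases
    case 1
    have "((\<lambda>y. 0) has_real_derivative 0) (at x)" by simp
    then have "(sig s j has_real_derivative 0) (at x)"
      by (rule has_field_derivative_transform_within_open[of _ _ _ "{..<5/4}"]) (use 1 sig_low in auto)
    then show ?thesis using sig_low 1 by simp
  next
    case 2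
    have "((\<lambda>y. sd s j (y - 1)) has_real_derivative sd s (Suc j) (x - 1)) (at x)"
    proof -
      have h: "((\<lambda>y. y - 1) has_real_derivative 1) (at x)" by (auto intro!: derivative_eq_intros)
      have "(sd s j has_real_derivative sd s (Suc j) (x - 1)) (at (x - 1))" using sd_props[OF s_smooth, of j] by blast
      from DERIV_chain2[OF this h] show ?thesis by simp
    qed
    then have "(sig s j has_real_derivative sd s (Suc j) (x - 1)) (at x)"
      by (rule has_field_derivative_transform_within_open[of _ _ _ "{1<..<2}"]) (use 2 in \<open>auto simp: sig_def\<close>)
    then show ?thesis using 2 by (simp add: sig_def)
  next
    case 3
    have "((\<lambda>y. if j = 0 then 1 else 0) has_real_derivative 0) (at x)" by simp
    then have "(sig s j has_real_derivative 0) (at x)"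
      by (rule has_field_derivative_transform_within_open[of _ _ _ "{7/4<..}"]) (use 3 sig_high in auto)
    then show ?thesis using sig_high 3 by simp
  qed
qed

lemma kap_deriv: "(kap s j has_real_derivative kap s (Suc j) x) (at x)"
proof -
  have "((\<lambda>x. 2^j * sig s j (2*x) - (1/2)^j * sig s j (x/2)) has_real_derivative
        2^j * (sig s (Suc j) (2*x) * 2) - (1/2)^j * (sig s (Suc j) (x/2) * (1/2))) (at x)"
  proof -
    have h1: "((\<lambda>x. 2*x) has_real_derivative 2) (at x)" by (auto intro!: derivative_eq_intros)
    have h2: "((\<lambda>x. x/2) has_real_derivative 1/2) (at x)" by (auto intro!: derivative_eq_intros)
    have a: "((\<lambda>x. sig s j (2*x)) has_real_derivative sig s (Suc j) (2 * x) * 2) (at x)"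
      using DERIV_chain2[OF sig_deriv[of j "2*x"] h1] by simp
    have b: "((\<lambda>x. sig s j (x/2)) has_real_derivative sig s (Suc j) (x/2) * (1/2)) (at x)"
      using DERIV_chain2[OF sig_deriv[of j "x/2"] h2] by simp
    show ?thesis by (intro DERIV_diff DERIV_cmult a b)
  qed
  then show ?thesis unfolding kap_def[abs_def] by (simp add: algebra_simps)
qed

lemma kap_cont: "continuous_on A (kap s j)"
  by (meson DERIV_isCont continuous_at_imp_continuous_on kap_deriv)

lemma kap_support: "x \<le> 1/2 \<or> 4 \<le> x \<Longrightarrow> kap s j x = 0"
  by (auto simp: kap_def sig_def)

lemma kap_bound: "\<exists>B\<ge>0. \<forall>x. \<bar>kap s j x\<bar> \<le> B"
proof -
  obtain B where B: "B \<ge> 0" "\<And>x. x \<in> {1/2..4} \<Longrightarrow> norm (kap s j x) \<le> B"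
    using continuous_on_compact_bound[of "{1/2..4::real}" "kap s j"] kap_cont by auto
  have "\<bar>kap s j x\<bar> \<le> B" for x
    using B kap_support[of x j] by (cases "x \<in> {1/2..4}") auto
  then show ?thesis using B(1) by blast
qed

end


type_synonym trm = "complex \<times> nat \<times> nat \<times> nat \<times> nat"

fun evalt :: "(real \<Rightarrow> real) \<Rightarrow> nat \<Rightarrow> trm \<Rightarrow> complex \<Rightarrow> complex" where
  "evalt s m (c, j, a, b, e) z =
     c * complex_of_real (kap s j (2^m * cmod z)) * z^a * cnj z ^ b / complex_of_real (cmod z ^ e)"

fun dterm :: "complex \<Rightarrow> nat \<Rightarrow> trm \<Rightarrow> trm list" where
  "dterm v m (c, j, a, b, e) =
    [(c * v * 2^m / 2, Suc j, a, Suc b, Suc e),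
     (c * cnj v * 2^m / 2, Suc j, Suc a, b, Suc e),
     (c * of_nat a * v, j, a - 1, b, e),
     (c * of_nat b * cnj v, j, a, b - 1, e),
     (- c * of_nat e * v / 2, j, a, Suc b, e + 2),
     (- c * of_nat e * cnj v / 2, j, Suc a, b, e + 2)]"

lemma inner_sgn_complex:
  assumes "z \<noteq> 0"
  shows "complex_of_real (inner v (sgn z)) = (v * cnj z + cnj v * z) / (2 * complex_of_real (cmod z))"
  using assms
  by (simp add: complex_eq_iff sgn_div_norm inner_complex_def field_simps)

context sfun begin

lemma kap_norm_deriv:
  assumes "z \<noteq> 0"
  shows "((\<lambda>w. kap s j (2^m * cmod w)) has_derivative
           (\<lambda>v. kap s (Suc j) (2^m * cmod z) * (2^m * inner v (sgn z)))) (at z)"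
proof -
  have N: "((\<lambda>w. 2^m * cmod w) has_derivative (\<lambda>v. 2^m * inner v (sgn z))) (at z)"
    using has_derivative_norm[OF assms] by (intro derivative_intros) auto
  show ?thesis
    using has_derivative_compose[OF N has_field_derivative_imp_has_derivative[OF kap_deriv]] .
qed

lemma evalt_deriv:
  assumes z: "z \<noteq> 0"
  shows "(evalt s m t has_derivative (\<lambda>v. sum_list (map (\<lambda>t'. evalt s m t' z) (dterm v m t)))) (at z)"
proof -
  obtain c j a b e where t: "t = (c, j, a, b, e)" by (cases t) auto
  have K: "((\<lambda>w. complex_of_real (kap s j (2^m * cmod w))) has_derivative
           (\<lambda>v. complex_of_real (kap s (Suc j) (2^m * cmod z) * (2^m * inner v (sgn z))))) (at z)"
    using kap_norm_deriv[OF z] by (rule has_derivative_of_real)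
  have R: "((\<lambda>w. complex_of_real (cmod w ^ e)) has_derivative
           (\<lambda>v. complex_of_real (of_nat e * inner v (sgn z) * cmod z ^ (e - 1)))) (at z)"
    using has_derivative_norm[OF z] by (intro derivative_intros) auto
  have P: "((\<lambda>w. w ^ a) has_derivative (\<lambda>v. of_nat a * v * z ^ (a - 1))) (at z)"
    by (auto intro!: derivative_eq_intros)
  have Q: "((\<lambda>w. cnj w ^ b) has_derivative (\<lambda>v. of_nat b * cnj v * cnj z ^ (b - 1))) (at z)"
    by (auto intro!: derivative_eq_intros)
  have R0: "complex_of_real (cmod z ^ e) \<noteq> 0" using z by simp
  have ev: "evalt s m (c, j, a, b, e) = (\<lambda>w. c * complex_of_real (kap s j (2^m * cmod w)) * w^a * cnj w ^ b / complex_of_real (cmod w ^ e))"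
    by (rule ext) simp
  have nz: "complex_of_real (cmod z) \<noteq> 0" using z by simp
  note I = inner_sgn_complex[OF z]
  show ?thesis unfolding t ev
    apply (rule has_derivative_eq_rhs)
     apply (rule has_derivative_divide[OF has_derivative_mult[OF has_derivative_mult[OF has_derivative_mult[OF has_derivative_const K] P] Q] R R0])
    apply (rule ext)
    subgoal for v
      using nz by (cases e) (simp_all add: I field_simps)
    done
qed

end


definition Mz :: "complex \<Rightarrow> nat" where "Mz z = nat \<lceil>log 2 (4 / cmod z)\<rceil>"

definition fsum :: "(real \<Rightarrow> real) \<Rightarrow> nat \<Rightarrow> trm list \<Rightarrow> complex \<Rightarrow> complex" where
  "fsum s m L z = sum_list (map (\<lambda>t. evalt s m t z) L)"

definition Ufam :: "(real \<Rightarrow> real) \<Rightarrow> (nat \<Rightarrow> trm list) \<Rightarrow> complex \<Rightarrow> complex" where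
  "Ufam s Lf z = (if z = 0 then 0 else (\<Sum>m<Mz z. fsum s m (Lf m) z))"

definition dfam :: "complex \<Rightarrow> (nat \<Rightarrow> trm list) \<Rightarrow> nat \<Rightarrow> trm list" where
  "dfam v Lf m = concat (map (dterm v m) (Lf m))"

lemma pow2_ge: 
  assumes "y > 0" "log 2 y \<le> real m"
  shows "y \<le> 2^m"
proof -
  have "y = 2 powr (log 2 y)" using assms by simp
  also have "\<dots> \<le> 2 powr (real m)" using assms by (intro powr_mono) auto
  finally show ?thesis by (simp add: powr_realpow)
qed

lemma Mz_big:
  assumes "z \<noteq> 0" "Mz z \<le> m"
  shows "4 \<le> 2^m * cmod z"
proof -
  have "log 2 (4 / cmod z) \<le> real m" using assms unfolding Mz_def by linarith
  then have "4 / cmod z \<le> 2^m" using assms by (intro pow2_ge) auto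
  then show ?thesis using assms by (simp add: field_simps)
qed

lemma sum_lessThan_extend:
  fixes M K :: nat
  assumes "\<And>m. M \<le> m \<Longrightarrow> f m = 0" "M \<le> K"
  shows "sum f {..<K} = sum f {..<M}"
proof (rule sum.mono_neutral_right)
  show "finite {..<K}" by simp
  show "{..<M} \<subseteq> {..<K}" using assms(2) by auto
  show "\<forall>i\<in>{..<K} - {..<M}. f i = 0" using assms(1) by auto
qed

context sfun begin

lemma evalt_zero_high: "4 \<le> 2^m * cmod z \<Longrightarrow> evalt s m t z = 0"
  by (cases t) (simp add: kap_support)

lemma evalt_zero_low: "2^m * cmod z \<le> 1/2 \<Longrightarrow> evalt s m t z = 0"
  by (cases t) (simp add: kap_support)

lemma fsum_zero_high: "4 \<le> 2^m * cmod z \<Longrightarrow> fsum s m L z = 0"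
  by (simp add: fsum_def evalt_zero_high)

lemma Ufam_eq:
  assumes "z \<noteq> 0" "\<And>m. M \<le> m \<Longrightarrow> 4 \<le> 2^m * cmod z"
  shows "Ufam s Lf z = (\<Sum>m<M. fsum s m (Lf m) z)"
proof -
  let ?f = "\<lambda>m. fsum s m (Lf m) z"
  have "(\<Sum>m<max M (Mz z). ?f m) = (\<Sum>m<M. ?f m)"
    by (rule sum_lessThan_extend) (auto intro: fsum_zero_high assms)
  moreover have "(\<Sum>m<max M (Mz z). ?f m) = (\<Sum>m<Mz z. ?f m)"
    by (rule sum_lessThan_extend) (auto intro: fsum_zero_high Mz_big[OF assms(1)])
  ultimately show ?thesis using assms by (simp add: Ufam_def)
qed

lemma fsum_deriv:
  assumes "z \<noteq> 0"
  shows "(fsum s m L has_derivative (\<lambda>v. fsum s m (concat (map (dterm v m) L)) z)) (at z)"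
proof (induction L)
  case Nil
  then show ?case by (simp add: fsum_def[abs_def])
next
  case (Cons t L)
  have e: "fsum s m (t # L) = (\<lambda>w. evalt s m t w + fsum s m L w)"
    by (simp add: fsum_def[abs_def])
  show ?case unfolding e
    by (rule has_derivative_eq_rhs[OF has_derivative_add[OF evalt_deriv[OF assms] Cons]])
       (simp add: fsum_def)
qed

lemma Ufam_deriv:
  assumes z: "z \<noteq> 0"
  shows "(Ufam s Lf has_derivative (\<lambda>v. Ufam s (dfam v Lf) z)) (at z)"
proof -
  define M0 where "M0 = nat \<lceil>log 2 (8 / cmod z)\<rceil>"
  have big: "4 \<le> 2^m * cmod w" if "w \<in> ball z (cmod z / 2)" "M0 \<le> m" for w m
  proof -
    have "log 2 (8 / cmod z) \<le> real m" using that unfolding M0_def by linarith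
    then have "8 / cmod z \<le> 2^m" using z by (intro pow2_ge) auto
    then have "8 \<le> 2^m * cmod z" using z by (simp add: field_simps)
    moreover have "cmod z \<le> 2 * cmod w"
      using that(1) norm_triangle_ineq2[of z w] by (simp add: dist_norm norm_minus_commute)
    ultimately have "8 \<le> 2^m * (2 * cmod w)"
      by (smt (verit, best) mult_left_mono zero_le_power)
    then show ?thesis by (simp add: mult.commute)
  qed
  have wnz: "w \<noteq> 0" if "w \<in> ball z (cmod z / 2)" for w
    using that z by (auto simp: dist_norm)
  have D: "((\<lambda>w. \<Sum>m<M0. fsum s m (Lf m) w) has_derivative
            (\<lambda>v. \<Sum>m<M0. fsum s m (concat (map (dterm v m) (Lf m))) z)) (at z)"
    by (intro has_derivative_sum fsum_deriv z)
  have D2: "(Ufam s Lf has_derivative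
            (\<lambda>v. \<Sum>m<M0. fsum s m (concat (map (dterm v m) (Lf m))) z)) (at z)"
    by (rule has_derivative_transform_within_open[OF D, of "ball z (cmod z / 2)"])
       (use z in \<open>auto simp: Ufam_eq[OF wnz big]\<close>)
  have "(\<Sum>m<M0. fsum s m (concat (map (dterm v m) (Lf m))) z) = Ufam s (dfam v Lf) z" for v
  proof -
    have "\<And>m. M0 \<le> m \<Longrightarrow> 4 \<le> 2^m * cmod z" using big[of z] z by auto
    from Ufam_eq[OF z this, where Lf = "dfam v Lf"] show ?thesis by (simp add: dfam_def)
  qed
  then show ?thesis using D2 by simp
qed

end


lemma KR_lim:
  fixes K A B :: real
  shows "((\<lambda>m::nat. K * 2 powr (- (real m * real m) / 2 + A * real m + B)) \<longlongrightarrow> 0) sequentially"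
  by real_asymp

lemma KR:
  fixes K A B \<epsilon> :: real
  assumes "\<epsilon> > 0"
  shows "\<exists>N. \<forall>m\<ge>N. K * 2 powr (- (real m * real m) / 2 + A * real m + B) \<le> \<epsilon>"
proof -
  have "eventually (\<lambda>m. K * 2 powr (- (real m * real m) / 2 + A * real m + B) < \<epsilon>) sequentially"
    using order_tendstoD(2)[OF KR_lim assms] .
  then show ?thesis unfolding eventually_sequentially by (meson less_imp_le)
qed


definition Fv :: "nat \<Rightarrow> real" where "Fv m = 2 powr (real m * real m / 2)"

definition Wk :: "nat \<Rightarrow> nat \<Rightarrow> real" where "Wk m k = 2^m * (2 + 2 * real k)"

definition good :: "nat \<Rightarrow> (nat \<Rightarrow> trm list) \<Rightarrow> bool" where
  "good k Lf \<longleftrightarrow> (\<exists>C N. C \<ge> 0 \<and> (\<forall>m. length (Lf m) \<le> N \<and>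
     (\<forall>(c,j,a,b,e) \<in> set (Lf m). (c \<noteq> 0 \<longrightarrow> a + b + k = m + e + j) \<and> j \<le> k \<and> e \<le> 2*k \<and>
        cmod c \<le> C * Fv m * Wk m k ^ k)))"

lemma nat_le_pow2: "real m \<le> 2^m"
proof -
  have "m < 2^m" by (rule less_exp)
  then have "real m \<le> real (2^m)" by linarith
  then show ?thesis by simp
qed

lemma mult_bound_aux:
  assumes "cmod c \<le> X" "0 \<le> \<mu>" "\<mu> \<le> W"
  shows "cmod c * \<mu> * cmod v \<le> X * W * cmod v"
proof -
  have "0 \<le> X" using assms(1) norm_ge_zero order_trans by blast
  then show ?thesis by (intro mult_right_mono mult_mono assms) auto
qed

lemma dterm_good:
  assumes inv: "c \<noteq> 0 \<longrightarrow> a + b + k = m + e + j" and jk: "j \<le> k" and ek: "e \<le> 2*k"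
    and cX: "cmod c \<le> X"
    and mem: "(c',j',a',b',e') \<in> set (dterm v m (c,j,a,b,e))"
  shows "(c' \<noteq> 0 \<longrightarrow> a' + b' + Suc k = m + e' + j') \<and> j' \<le> Suc k \<and> e' \<le> 2*Suc k \<and>
         cmod c' \<le> X * Wk m k * cmod v"
proof (cases "c = 0")
  case True
  have X0: "0 \<le> X * Wk m k * cmod v" using cX True by (simp add: Wk_def)
  show ?thesis using mem True jk ek X0 by auto
next
  case False
  then have abk: "a + b + k = m + e + j" using inv by simp
  have W0: "0 \<le> Wk m k" by (simp add: Wk_def)
  have m2: "real m \<le> 2^m" by (rule nat_le_pow2)
  have Wge: "real m + 2 * real k \<le> Wk m k"
  proof -
    have p1: "(1::real) \<le> 2^m" by simp
    have "2 * real k * 1 \<le> 2 * real k * 2^m" using p1 by (intro mult_left_mono) auto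
    then have "real m + 2 * real k \<le> 2^m + 2 * real k * 2^m"
      using m2 by linarith
    moreover have "Wk m k = 2^m + (2^m + 2 * real k * 2^m)" by (simp add: Wk_def algebra_simps)
    moreover have "(0::real) \<le> 2^m" by simp
    ultimately show ?thesis by linarith
  qed
  have ha: "real a \<le> Wk m k" using abk jk ek Wge by linarith
  have hb: "real b \<le> Wk m k" using abk jk ek Wge by linarith
  have he: "real e / 2 \<le> Wk m k" using abk jk ek Wge by linarith
  have h2: "2^m / 2 \<le> Wk m k" by (simp add: Wk_def)
  have n1: "cmod (c * v * 2^m / 2) \<le> X * Wk m k * cmod v"
    using mult_bound_aux[OF cX _ h2, of v] by (simp add: norm_mult norm_divide norm_power mult_ac)
  have n2: "cmod (c * cnj v * 2^m / 2) \<le> X * Wk m k * cmod v"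
    using mult_bound_aux[OF cX _ h2, of v] by (simp add: norm_mult norm_divide norm_power mult_ac)
  have n3: "cmod (c * of_nat a * v) \<le> X * Wk m k * cmod v"
    using mult_bound_aux[OF cX _ ha, of v] by (simp add: norm_mult mult_ac)
  have n4: "cmod (c * of_nat b * cnj v) \<le> X * Wk m k * cmod v"
    using mult_bound_aux[OF cX _ hb, of v] by (simp add: norm_mult mult_ac)
  have n5: "cmod (- c * of_nat e * v / 2) \<le> X * Wk m k * cmod v"
    using mult_bound_aux[OF cX _ he, of v] by (simp add: norm_mult norm_divide mult_ac)
  have n6: "cmod (- c * of_nat e * cnj v / 2) \<le> X * Wk m k * cmod v"
    using mult_bound_aux[OF cX _ he, of v] by (simp add: norm_mult norm_divide mult_ac)
  have a1: "c * of_nat a * v \<noteq> 0 \<Longrightarrow> a - 1 + b + Suc k = m + e + j" using abk by (cases a) auto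
  have b1: "c * of_nat b * cnj v \<noteq> 0 \<Longrightarrow> a + (b - 1) + Suc k = m + e + j" using abk by (cases b) auto
  from mem show ?thesis
    apply (simp only: dterm.simps list.set insert_iff empty_iff prod.inject)
    apply (elim disjE conjE)
    apply (simp_all only:)
    using abk jk ek n1 n2 n3 n4 n5 n6 a1 b1 by auto
qed

lemma len_dterm: "length (concat (map (dterm v m) L)) = 6 * length L"
proof (induction L)
  case (Cons t L) then show ?case by (cases t) auto
qed simp

lemma Wk_mono: "Wk m k \<le> Wk m (Suc k)"
  by (simp add: Wk_def)

lemma good_dfam:
  assumes "good k Lf"
  shows "good (Suc k) (dfam v Lf)"
proof -
  from assms obtain C N where C: "C \<ge> 0" and HH: "\<forall>m. length (Lf m) \<le> N \<and>
     (\<forall>(c,j,a,b,e) \<in> set (Lf m). (c \<noteq> 0 \<longrightarrow> a + b + k = m + e + j) \<and> j \<le> k \<and> e \<le> 2*k \<and>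
        cmod c \<le> C * Fv m * Wk m k ^ k)"
    unfolding good_def by blast
  have H1: "\<And>m. length (Lf m) \<le> N" using HH by blast
  have H2: "(c \<noteq> 0 \<longrightarrow> a + b + k = m + e + j) \<and> j \<le> k \<and> e \<le> 2*k \<and> cmod c \<le> C * Fv m * Wk m k ^ k"
    if "(c,j,a,b,e) \<in> set (Lf m)" for m c j a b e
  proof -
    have "\<forall>(c,j,a,b,e) \<in> set (Lf m). (c \<noteq> 0 \<longrightarrow> a + b + k = m + e + j) \<and> j \<le> k \<and> e \<le> 2*k \<and>
        cmod c \<le> C * Fv m * Wk m k ^ k" using HH by blast
    from bspec[OF this that] show ?thesis by simp
  qed
  note H = H1 H2
  have len: "length (dfam v Lf m) \<le> 6 * N" for m
  proof -
    have "length (dfam v Lf m) = 6 * length (Lf m)"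
      unfolding dfam_def by (rule len_dterm)
    then show ?thesis using H(1)[of m] by simp
  qed
  have el: "(c' \<noteq> 0 \<longrightarrow> a' + b' + Suc k = m + e' + j') \<and> j' \<le> Suc k \<and> e' \<le> 2*Suc k \<and>
         cmod c' \<le> (C * cmod v) * Fv m * Wk m (Suc k) ^ Suc k"
    if memd: "(c',j',a',b',e') \<in> set (dfam v Lf m)" for m c' j' a' b' e'
  proof -
    obtain t where t: "t \<in> set (Lf m)" "(c',j',a',b',e') \<in> set (dterm v m t)"
      using memd unfolding dfam_def set_concat set_map by blast
    obtain c j a b e where te: "t = (c,j,a,b,e)" by (cases t) auto
    note h = H(2)[OF t(1)[unfolded te]]
    have d: "(c' \<noteq> 0 \<longrightarrow> a' + b' + Suc k = m + e' + j') \<and> j' \<le> Suc k \<and> e' \<le> 2*Suc k \<and>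
         cmod c' \<le> (C * Fv m * Wk m k ^ k) * Wk m k * cmod v"
      by (rule dterm_good) (use h t(2) te in auto)
    have "(C * Fv m * Wk m k ^ k) * Wk m k * cmod v = (C * cmod v) * Fv m * Wk m k ^ Suc k"
      by (simp add: algebra_simps)
    also have "\<dots> \<le> (C * cmod v) * Fv m * Wk m (Suc k) ^ Suc k"
      using C by (intro mult_left_mono power_mono Wk_mono) (auto simp: Wk_def Fv_def)
    finally show ?thesis using d by linarith
  qed
  show ?thesis unfolding good_def
  proof (intro exI[of _ "C * cmod v"] exI[of _ "6 * N"] conjI allI ballI)
    show "0 \<le> C * cmod v" using C by simp
  next
    fix m show "length (dfam v Lf m) \<le> 6 * N" by (rule len)
  next
    fix m x assume xm: "x \<in> set (dfam v Lf m)"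
    obtain c j a b e where xe: "x = (c,j,a,b,e)" by (cases x) auto
    show "case x of (c, j, a, b, e) \<Rightarrow> (c \<noteq> 0 \<longrightarrow> a + b + Suc k = m + e + j) \<and> j \<le> Suc k \<and> e \<le> 2 * Suc k \<and>
        cmod c \<le> C * cmod v * Fv m * Wk m (Suc k) ^ Suc k"
      using el[OF xm[unfolded xe]] unfolding xe by simp
  qed
qed


lemma KB:
  fixes x :: real
  assumes x: "x > 0" "1/2 < 2^m * x" "2^m * x < 4"
  shows "Fv m * Wk m k ^ k * x^m / x^k / x^J \<le>
         (2 + 2 * real k)^k * 2 powr (- (real m * real m) / 2 + (2 * real k + real J + 3) * real m + (real k + real J + 1)) * (1/2)^(m+1)"
proof -
  have p2m: "(2::real)^m = 2 powr real m" by (simp add: powr_realpow)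
  have W: "Wk m k ^ k = (2 + 2 * real k)^k * 2 powr (real m * real k)"
  proof -
    have "Wk m k ^ k = (2^m)^k * (2 + 2 * real k)^k" by (simp add: Wk_def power_mult_distrib)
    also have "((2::real)^m) ^ k = 2 powr (real m * real k)"
    proof -
      have "((2::real)^m) ^ k = 2^(m*k)" by (simp add: power_mult)
      also have "\<dots> = 2 powr (real (m*k))" by (rule powr_realpow[symmetric]) simp
      finally show ?thesis by simp
    qed
    finally show ?thesis by simp
  qed
  have x1: "x \<le> 2 powr (2 - real m)"
  proof -
    have "x \<le> 4 / 2^m" using x by (simp add: field_simps)
    also have "4 / 2^m = 2 powr (2 - real m)" by (simp add: p2m powr_diff)
    finally show ?thesis .
  qed
  have xm: "x^m \<le> 2 powr ((2 - real m) * real m)"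
  proof -
    have "x^m \<le> (2 powr (2 - real m))^m" using x1 x by (intro power_mono) auto
    also have "\<dots> = 2 powr ((2 - real m) * real m)" by (simp add: powr_power mult.commute)
    finally show ?thesis .
  qed
  have ix: "1/x \<le> 2 powr (real m + 1)"
  proof -
    have "1/x \<le> 2 * 2^m" using x by (simp add: field_simps)
    also have "\<dots> = 2 powr (real m + 1)" by (simp add: p2m powr_add)
    finally show ?thesis .
  qed
  have ixk: "(1/x)^(k+J) \<le> 2 powr ((real m + 1) * (real k + real J))"
  proof -
    have "(1/x)^(k+J) \<le> (2 powr (real m + 1))^(k+J)" using ix x by (intro power_mono) auto
    also have "\<dots> = 2 powr ((real m + 1) * (real k + real J))" by (simp add: powr_power mult.commute)
    finally show ?thesis .
  qed
  have L: "Fv m * Wk m k ^ k * x^m / x^k / x^J = Fv m * Wk m k ^ k * x^m * (1/x)^(k+J)"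
    using x by (simp add: field_simps power_add)
  have "Fv m * Wk m k ^ k * x^m * (1/x)^(k+J) \<le>
        Fv m * Wk m k ^ k * 2 powr ((2 - real m) * real m) * 2 powr ((real m + 1) * (real k + real J))"
    using xm ixk x by (intro mult_mono) (auto simp: Fv_def Wk_def)
  also have "\<dots> = (2 + 2 * real k)^k * (2 powr (real m * real m / 2) * 2 powr (real m * real k) *
        2 powr ((2 - real m) * real m) * 2 powr ((real m + 1) * (real k + real J)))"
    by (simp add: Fv_def W)
  also have "2 powr (real m * real m / 2) * 2 powr (real m * real k) *
        2 powr ((2 - real m) * real m) * 2 powr ((real m + 1) * (real k + real J)) =
        2 powr (real m * real m / 2 + real m * real k + (2 - real m) * real m + (real m + 1) * (real k + real J))"
    by (simp add: powr_add)
  also have "real m * real m / 2 + real m * real k + (2 - real m) * real m + (real m + 1) * (real k + real J)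
      = (- (real m * real m) / 2 + (2 * real k + real J + 3) * real m + (real k + real J + 1)) + (- (real m + 1))"
    by (simp add: algebra_simps)
  also have "2 powr ((- (real m * real m) / 2 + (2 * real k + real J + 3) * real m + (real k + real J + 1)) + (- (real m + 1)))
     = 2 powr (- (real m * real m) / 2 + (2 * real k + real J + 3) * real m + (real k + real J + 1)) * (1/2)^(m+1)"
  proof -
    have "2 powr (- (real m + 1)) = inverse (2 powr (real (m+1)))"
      using powr_minus[of 2 "real (m+1)"] by (simp add: algebra_simps)
    also have "\<dots> = (1/2::real)^(m+1)"
    proof -
      have "2 powr (real (m+1)) = (2::real)^(m+1)" by (rule powr_realpow) simp
      then show ?thesis by (simp only: power_one_over inverse_eq_divide)
    qed
    finally have "2 powr (- (real m + 1)) = (1/2::real)^(m+1)" .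
    then show ?thesis by (metis powr_add)
  qed
  finally show ?thesis using L by (simp add: mult.assoc)
qed


lemma norm_sum_list_bound:
  assumes "\<And>t. t \<in> set L \<Longrightarrow> cmod (f t) \<le> Y"
  shows "cmod (sum_list (map f L)) \<le> real (length L) * Y"
  using assms
proof (induction L)
  case (Cons t L)
  have "cmod (sum_list (map f (t # L))) \<le> cmod (f t) + cmod (sum_list (map f L))"
    by (simp add: norm_triangle_ineq)
  also have "\<dots> \<le> Y + real (length L) * Y" using Cons by (intro add_mono) auto
  finally show ?case by (simp add: algebra_simps)
qed simp

lemma geom_half_sum: "(\<Sum>m<M. (1/2::real)^(m+1)) = 1 - (1/2)^M"
  by (induction M) (auto simp: algebra_simps)

context sfun begin

lemma kap_bound_upto: "\<exists>B\<ge>0. \<forall>j\<le>k. \<forall>x. \<bar>kap s j x\<bar> \<le> B"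
proof (induction k)
  case 0 then show ?case using kap_bound[of 0] by auto
next
  case (Suc k)
  obtain B where B: "B \<ge> 0" "\<forall>j\<le>k. \<forall>x. \<bar>kap s j x\<bar> \<le> B" using Suc by auto
  obtain B' where B': "B' \<ge> 0" "\<forall>x. \<bar>kap s (Suc k) x\<bar> \<le> B'" using kap_bound by blast
  have "\<forall>j\<le>Suc k. \<forall>x. \<bar>kap s j x\<bar> \<le> max B B'"
    using B B' by (metis le_Suc_eq max.coboundedI1 max.coboundedI2)
  then show ?case using B by (intro exI[of _ "max B B'"]) auto
qed

lemma evalt_bound:
  assumes inv: "c \<noteq> 0 \<longrightarrow> a + b + k = m + e + j" and r: "0 < cmod z" "cmod z \<le> 1"
    and B: "\<forall>x. \<bar>kap s j x\<bar> \<le> B" and cX: "cmod c \<le> X"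
  shows "cmod (evalt s m (c,j,a,b,e) z) \<le> X * B * (cmod z ^ m / cmod z ^ k)"
proof -
  let ?r = "cmod z"
  have X0: "0 \<le> X" using cX norm_ge_zero order_trans by blast
  have B0: "0 \<le> B" using B[rule_format, of 0] by linarith
  have nrm: "cmod (evalt s m (c,j,a,b,e) z) = cmod c * \<bar>kap s j (2^m * ?r)\<bar> * (?r^a * ?r^b / ?r^e)"
    by (simp add: norm_mult norm_divide norm_power)
  show ?thesis
  proof (cases "c = 0")
    case True
    then show ?thesis using X0 B0 by simp
  next
    case False
    then have abk: "a + b + k = m + e + j" using inv by simp
    have pw: "?r^a * ?r^b / ?r^e \<le> ?r^m / ?r^k"
    proof -
      have "?r^a * ?r^b * ?r^k = ?r^(m+e+j)" by (simp add: abk[symmetric] power_add)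
      also have "\<dots> \<le> ?r^(m+e)" using r by (intro power_decreasing) auto
      also have "\<dots> = ?r^m * ?r^e" by (simp add: power_add)
      finally have h: "?r^a * ?r^b * ?r^k \<le> ?r^m * ?r^e" .
      have pk: "0 < ?r^k" "0 < ?r^e" using r by auto
      show ?thesis using h pk by (simp add: divide_le_eq le_divide_eq field_simps)
    qed
    have "cmod c * \<bar>kap s j (2^m * ?r)\<bar> * (?r^a * ?r^b / ?r^e) \<le> X * B * (?r^m / ?r^k)"
      using cX B pw X0 B0 by (intro mult_mono) auto
    then show ?thesis using nrm by simp
  qed
qed

lemma Ufam_flat:
  assumes "good k Lf"
  shows "((\<lambda>z. cmod (Ufam s Lf z) / cmod z ^ J) \<longlongrightarrow> 0) (at 0)"
proof -
  from assms obtain C N where C: "C \<ge> 0" and HH: "\<forall>m. length (Lf m) \<le> N \<and>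
     (\<forall>(c,j,a,b,e) \<in> set (Lf m). (c \<noteq> 0 \<longrightarrow> a + b + k = m + e + j) \<and> j \<le> k \<and> e \<le> 2*k \<and>
        cmod c \<le> C * Fv m * Wk m k ^ k)"
    unfolding good_def by blast
  have H1: "\<And>m. length (Lf m) \<le> N" using HH by blast
  have H2: "(c \<noteq> 0 \<longrightarrow> a + b + k = m + e + j) \<and> j \<le> k \<and> e \<le> 2*k \<and> cmod c \<le> C * Fv m * Wk m k ^ k"
    if "(c,j,a,b,e) \<in> set (Lf m)" for m c j a b e
  proof -
    have "\<forall>(c,j,a,b,e) \<in> set (Lf m). (c \<noteq> 0 \<longrightarrow> a + b + k = m + e + j) \<and> j \<le> k \<and> e \<le> 2*k \<and>
        cmod c \<le> C * Fv m * Wk m k ^ k" using HH by blast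
    from bspec[OF this that] show ?thesis by simp
  qed
  obtain B where B0: "B \<ge> 0" and B: "\<forall>j\<le>k. \<forall>x. \<bar>kap s j x\<bar> \<le> B" using kap_bound_upto by blast
  define K where "K = real N * C * B * (2 + 2 * real k)^k"
  have K0: "K \<ge> 0" using C B0 by (simp add: K_def)
  show ?thesis unfolding LIM_eq
  proof (intro allI impI)
    fix r :: real assume r: "r > 0"
    obtain N0 where N0: "\<forall>m\<ge>N0. K * 2 powr (- (real m * real m) / 2 + (2 * real k + real J + 3) * real m + (real k + real J + 1)) \<le> r/2"
      using KR[of "r/2" K "2 * real k + real J + 3" "real k + real J + 1"] r by auto
    define \<delta> where "\<delta> = (1/2::real)^(N0+1)"
    have \<delta>0: "\<delta> > 0" by (simp add: \<delta>_def)
    have \<delta>1: "\<delta> \<le> 1" unfolding \<delta>_def by (rule power_le_one) auto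
    show "\<exists>\<delta>>0. \<forall>z. z \<noteq> 0 \<and> norm (z - 0) < \<delta> \<longrightarrow> norm (cmod (Ufam s Lf z) / cmod z ^ J - 0) < r"
    proof (intro exI[of _ \<delta>] conjI allI impI \<delta>0)
      fix z :: complex assume zz: "z \<noteq> 0 \<and> norm (z - 0) < \<delta>"
      then have z0: "0 < cmod z" and zd: "cmod z < \<delta>" by auto
      have z1: "cmod z \<le> 1" using zd \<delta>1 by linarith
      have termb: "cmod (fsum s m (Lf m) z) / cmod z ^ J \<le> r/2 * (1/2)^(m+1)" for m
      proof (cases "2^m * cmod z \<le> 1/2 \<or> 4 \<le> 2^m * cmod z")
        case True
        then have "fsum s m (Lf m) z = 0"
          by (auto simp: fsum_def evalt_zero_low evalt_zero_high)
        then show ?thesis using r by simp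
      next
        case False
        then have lo: "1/2 < 2^m * cmod z" and hi: "2^m * cmod z < 4" by auto
        have mN: "N0 \<le> m"
        proof (rule ccontr)
          assume "\<not> N0 \<le> m"
          then have "m + 1 \<le> N0" by simp
          then have "(2::real)^(m+1) \<le> 2^N0" by (intro power_increasing) auto
          moreover have "2^N0 * cmod z < 2^N0 * \<delta>" using zd by simp
          moreover have "2^N0 * \<delta> = 1/2" by (simp add: \<delta>_def power_one_over field_simps)
          ultimately have "2^(m+1) * cmod z < 1/2"
            by (smt (verit) mult_right_mono z0)
          then show False using lo by simp
        qed
        have tb: "cmod (evalt s m t z) \<le> (C * Fv m * Wk m k ^ k) * B * (cmod z ^ m / cmod z ^ k)"
          if "t \<in> set (Lf m)" for t
        proof -
          obtain c j a b e where te: "t = (c,j,a,b,e)" by (cases t) auto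
          note h = H2[OF that[unfolded te]]
          show ?thesis unfolding te
            by (rule evalt_bound) (use h z0 z1 B in auto)
        qed
        have "cmod (fsum s m (Lf m) z) \<le> real (length (Lf m)) * ((C * Fv m * Wk m k ^ k) * B * (cmod z ^ m / cmod z ^ k))"
          unfolding fsum_def by (rule norm_sum_list_bound) (rule tb)
        also have "\<dots> \<le> real N * ((C * Fv m * Wk m k ^ k) * B * (cmod z ^ m / cmod z ^ k))"
          using H1[of m] C B0 by (intro mult_right_mono) (auto simp: Fv_def Wk_def)
        finally have f1: "cmod (fsum s m (Lf m) z) / cmod z ^ J \<le>
             real N * C * B * (Fv m * Wk m k ^ k * cmod z ^ m / cmod z ^ k / cmod z ^ J)"
          using z0 by (simp add: divide_right_mono field_simps)
        also have "\<dots> \<le> real N * C * B * ((2 + 2 * real k)^k * 2 powr (- (real m * real m) / 2 + (2 * real k + real J + 3) * real m + (real k + real J + 1)) * (1/2)^(m+1))"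
          using KB[OF z0 lo hi, of k J] C B0 by (intro mult_left_mono) auto
        also have "\<dots> = K * 2 powr (- (real m * real m) / 2 + (2 * real k + real J + 3) * real m + (real k + real J + 1)) * (1/2)^(m+1)"
          by (simp add: K_def)
        also have "\<dots> \<le> r/2 * (1/2)^(m+1)"
          using N0 mN by (intro mult_right_mono) auto
        finally show ?thesis .
      qed
      have "cmod (Ufam s Lf z) \<le> (\<Sum>m<Mz z. cmod (fsum s m (Lf m) z))"
        using zz by (simp add: Ufam_def norm_sum)
      then have "cmod (Ufam s Lf z) / cmod z ^ J \<le> (\<Sum>m<Mz z. cmod (fsum s m (Lf m) z) / cmod z ^ J)"
        using z0 by (simp add: sum_divide_distrib[symmetric] divide_right_mono)
      also have "\<dots> \<le> (\<Sum>m<Mz z. r/2 * (1/2)^(m+1))" by (intro sum_mono termb)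
      also have "\<dots> = r/2 * (\<Sum>m<Mz z. (1/2::real)^(m+1))" by (rule sum_distrib_left[symmetric])
      also have "\<dots> = r/2 * (1 - (1/2)^(Mz z))" by (simp only: geom_half_sum)
      also have "\<dots> < r"
      proof -
        have "0 < (1/2::real)^(Mz z)" by simp
        then have "0 < r * (1/2::real)^(Mz z)" using r by simp
        then show ?thesis using r by (simp add: algebra_simps add_pos_pos)
      qed
      finally show "norm (cmod (Ufam s Lf z) / cmod z ^ J - 0) < r" by simp
    qed
  qed
qed

end


lemma Ck_on_Pair:
  "Ck_on n S f \<Longrightarrow> Ck_on n S g \<Longrightarrow> Ck_on n S (\<lambda>x. (f x, g x))"
proof (induction n arbitrary: f g)
  case 0
  then show ?case by (auto intro: continuous_on_Pair)
next
  case (Suc n)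
  from Suc.prems(1) obtain f' where f': "\<forall>x\<in>S. (f has_derivative f' x) (at x)" "\<forall>v. Ck_on n S (\<lambda>x. f' x v)" by auto
  from Suc.prems(2) obtain g' where g': "\<forall>x\<in>S. (g has_derivative g' x) (at x)" "\<forall>v. Ck_on n S (\<lambda>x. g' x v)" by auto
  show ?case
    using f' g' Suc.IH
    by (auto intro!: exI[of _ "\<lambda>x v. (f' x v, g' x v)"] has_derivative_Pair)
qed

lemma Ck_on_transfer:
  assumes "open S" "\<And>x. x \<in> S \<Longrightarrow> f x = g x" "Ck_on n S f"
  shows "Ck_on n S g"
  using assms(2,3)
proof (induction n arbitrary: f g)
  case 0
  then show ?case using continuous_on_cong by (metis Ck_on.simps(1))
next
  case (Suc n)
  from Suc.prems(2) obtain f' where f': "\<forall>x\<in>S. (f has_derivative f' x) (at x)" "\<forall>v. Ck_on n S (\<lambda>x. f' x v)" by auto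
  have "\<forall>x\<in>S. (g has_derivative f' x) (at x)"
  proof
    fix x assume x: "x \<in> S"
    show "(g has_derivative f' x) (at x)"
      using has_derivative_transform_within_open[of f "f' x" x UNIV S g] f'(1) x Suc.prems(1) assms(1) by auto
  qed
  then show ?case using f'(2) by auto
qed

context sfun begin

lemma Ufam_zero[simp]: "Ufam s Lf 0 = 0" by (simp add: Ufam_def)

lemma Ufam_deriv0:
  assumes "good k Lf"
  shows "(Ufam s Lf has_derivative (\<lambda>v. 0)) (at 0)"
proof -
  have "((\<lambda>h. cmod (Ufam s Lf h) / cmod h ^ 1) \<longlongrightarrow> 0) (at 0)" by (rule Ufam_flat[OF assms])
  then show ?thesis unfolding has_derivative_at by (simp add: bounded_linear_zero)
qed

lemma Ufam_cont0:
  assumes "good k Lf"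
  shows "isCont (Ufam s Lf) 0"
  using has_derivative_continuous[OF Ufam_deriv0[OF assms]] .

lemma Ufam_Ck:
  assumes "good k Lf"
  shows "Ck_on n S (Ufam s Lf)"
  using assms
proof (induction n arbitrary: k Lf)
  case 0
  have "isCont (Ufam s Lf) z" for z
  proof (cases "z = 0")
    case True then show ?thesis using Ufam_cont0[OF 0] by simp
  next
    case False then show ?thesis using has_derivative_continuous[OF Ufam_deriv[OF False]] by simp
  qed
  then show ?case by (simp add: continuous_at_imp_continuous_on)
next
  case (Suc n)
  have d: "(Ufam s Lf has_derivative (\<lambda>v. Ufam s (dfam v Lf) x)) (at x)" for x
  proof (cases "x = 0")
    case True then show ?thesis using Ufam_deriv0[OF Suc.prems] by simp
  next
    case False then show ?thesis using Ufam_deriv by blast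
  qed
  have c: "Ck_on n S (\<lambda>x. Ufam s (dfam v Lf) x)" for v
    using Suc.IH[OF good_dfam[OF Suc.prems]] by simp
  show ?case using d c by (auto intro!: exI[of _ "\<lambda>x v. Ufam s (dfam v Lf) x"])
qed

end


lemma r_Suc: "2 powr (1 - real (Suc n)) = 1 / (2::real)^n"
proof -
  have "2 powr (1 - real (Suc n)) = 2 powr (- real n)" by simp
  also have "\<dots> = inverse (2 powr real n)" by (rule powr_minus)
  also have "\<dots> = 1 / 2^n" by (simp add: powr_realpow inverse_eq_divide)
  finally show ?thesis .
qed

lemma r_n: "n \<ge> 1 \<Longrightarrow> 2 powr (1 - real n) = 2 / (2::real)^n"
proof -
  assume "n \<ge> 1"
  then obtain k where k: "n = Suc k" by (cases n) auto
  have "2 powr (1 - real n) = 1 / 2^k" using r_Suc[of k] k by simp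
  also have "\<dots> = 2 / 2^n" using k by simp
  finally show ?thesis .
qed

lemma annulus_facts:
  assumes z: "0 < cmod z" "cmod z < 1"
  defines "N \<equiv> annulus_idx (\<lambda>n. 2 powr (1 - real n)) z"
  shows "1 \<le> N \<and> 1 \<le> 2^N * cmod z \<and> 2^N * cmod z < 2"
proof -
  let ?P = "\<lambda>n. 1 \<le> n \<and> 2 powr (1 - real (Suc n)) \<le> cmod z"
  have NL: "N = (LEAST n. ?P n)" by (simp add: N_def annulus_idx_def)
  obtain n0 where n0: "1 / cmod z < 2^n0" using real_arch_pow[of 2 "1 / cmod z"] by auto
  have "?P (max 1 n0)"
  proof -
    have "(2::real)^n0 \<le> 2^(max 1 n0)" by (intro power_increasing) auto
    then have "1 / cmod z < 2^(max 1 n0)" using n0 by linarith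
    then have "1 / 2^(max 1 n0) \<le> cmod z" using z by (simp add: field_simps)
    then show ?thesis by (subst r_Suc) simp
  qed
  then have PN: "?P N" unfolding NL by (rule LeastI)
  have up: "cmod z < 2 / 2^N"
  proof (cases "N = 1")
    case True then show ?thesis using z by simp
  next
    case False
    then have N2: "N - 1 < N" "1 \<le> N - 1" using PN by auto
    have "\<not> ?P (N - 1)" unfolding NL by (rule not_less_Least) (use N2 NL in auto)
    then have "cmod z < 2 powr (1 - real N)" using N2 by simp
    also have "\<dots> = 2 / 2^N" using N2 by (intro r_n) auto
    finally show ?thesis .
  qed
  have "1 / 2^N \<le> cmod z" using PN r_Suc[of N] by simp
  then have "1 \<le> 2^N * cmod z" by (simp add: field_simps)
  moreover have "2^N * cmod z < 2" using up by (simp add: field_simps)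
  ultimately show ?thesis using PN by simp
qed

definition LP :: "bool \<Rightarrow> nat \<Rightarrow> trm list" where
  "LP par m = (if even m = par then [(complex_of_real (Fv m), 0, m, 0, 0)] else [])"

lemma good_LP: "good 0 (LP par)"
  unfolding good_def LP_def by (intro exI[of _ 1] exI[of _ 1]) (auto simp: Fv_def)

context sfun begin

lemma Ufam_three:
  assumes n: "1 \<le> n" "1 \<le> 2^n * cmod z" "2^n * cmod z < 2"
  shows "Ufam s Lf z = fsum s (n-1) (Lf (n-1)) z + fsum s n (Lf n) z + fsum s (Suc n) (Lf (Suc n)) z"
proof -
  have z: "z \<noteq> 0" using n by auto
  have big: "4 \<le> 2^m * cmod z" if "n + 2 \<le> m" for m
  proof -
    have "(2::real)^(n+2) \<le> 2^m" using that by (intro power_increasing) auto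
    then have "2^(n+2) * cmod z \<le> 2^m * cmod z" by (simp add: mult_right_mono)
    moreover have "2^(n+2) * cmod z = 4 * (2^n * cmod z)" by (simp add: power_add)
    ultimately show ?thesis using n by linarith
  qed
  have e: "Ufam s Lf z = (\<Sum>m<n+2. fsum s m (Lf m) z)" by (rule Ufam_eq[OF z big]) simp
  have low: "fsum s m (Lf m) z = 0" if "m < n - 1" for m
  proof -
    have "(2::real)^m \<le> 2^(n-2)" using that by (intro power_increasing) auto
    then have "2^m * cmod z \<le> 2^(n-2) * cmod z" by (simp add: mult_right_mono)
    moreover have "2^n * cmod z = 4 * (2^(n-2) * cmod z)"
    proof -
      have "n = (n - 2) + 2" using that by simp
      then have "(2::real)^n = 2^(n-2) * 4" by (metis power_add numeral_Bit0 power2_eq_square numeral_times_numeral num_double)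
      then show ?thesis by simp
    qed
    ultimately have "2^m * cmod z \<le> 1/2" using n by linarith
    then show ?thesis by (simp add: fsum_def evalt_zero_low)
  qed
  obtain k where k: "n = Suc k" using n by (cases n) auto
  have "(\<Sum>m<n+2. fsum s m (Lf m) z) = (\<Sum>m<k. fsum s m (Lf m) z) + fsum s k (Lf k) z
        + fsum s (Suc k) (Lf (Suc k)) z + fsum s (Suc (Suc k)) (Lf (Suc (Suc k))) z"
    unfolding k by simp
  moreover have "(\<Sum>m<k. fsum s m (Lf m) z) = 0" using low k by simp
  ultimately show ?thesis using e k by simp
qed

lemma sig0_mid: "1 \<le> y \<Longrightarrow> y < 2 \<Longrightarrow> sig s 0 y = s (y - 1)"
  using s_zero by (auto simp: sig_def sd_def)

lemma kap_vals:
  assumes "1 \<le> y" "y < 2"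
  shows "kap s 0 (y/2) = s (y - 1)" "kap s 0 y = 1" "kap s 0 (2*y) = 1 - s (y - 1)" "kap s 1 y = 0"
  using assms sig0_mid by (auto simp: kap_def sig_def)

lemma fsum_LP: "fsum s m (LP par m) z =
   (if even m = par then complex_of_real (Fv m) * complex_of_real (kap s 0 (2^m * cmod z)) * z^m else 0)"
  by (simp add: fsum_def LP_def)

definition alpha :: "nat \<Rightarrow> complex \<Rightarrow> complex" where
  "alpha m z = complex_of_real (Fv m) * (2^m / 2 * complex_of_real (kap s 1 (2^m * cmod z)) * z^m * cnj z / complex_of_real (cmod z)
      + of_nat m * complex_of_real (kap s 0 (2^m * cmod z)) * z^(m-1))"

definition beta :: "nat \<Rightarrow> complex \<Rightarrow> complex" where
  "beta m z = complex_of_real (Fv m) * (2^m / 2 * complex_of_real (kap s 1 (2^m * cmod z)) * z^(Suc m) / complex_of_real (cmod z))"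

lemma fsum_dLP: "fsum s m (dfam v (LP par) m) z =
   (if even m = par then v * alpha m z + cnj v * beta m z else 0)"
  by (simp add: fsum_def LP_def dfam_def alpha_def beta_def field_simps)

end


lemma Fpow: "2 powr ((real n)^2 / 2) = Fv n"
  by (simp add: Fv_def power2_eq_square)

context sfun begin

lemma gc_eq:
  assumes z: "0 < cmod z" "cmod z < 1"
  shows "gc_u s (\<lambda>n. 2 powr (1 - real n)) (\<lambda>n. n) (\<lambda>n. 2 powr ((real n)^2/2)) z
       = (Ufam s (LP True) z, Ufam s (LP False) z)"
proof -
  define N where "N = annulus_idx (\<lambda>n. 2 powr (1 - real n)) z"
  have NF: "1 \<le> N" "1 \<le> 2^N * cmod z" "2^N * cmod z < 2"
    using annulus_facts[OF z] unfolding N_def by auto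
  define y where "y = 2^N * cmod z"
  have y: "1 \<le> y" "y < 2" using NF by (auto simp: y_def)
  have chi: "(cmod z - 2 powr (1 - real (Suc N))) / (2 powr (1 - real N) - 2 powr (1 - real (Suc N))) = y - 1"
    unfolding r_Suc r_n[OF NF(1)] y_def by (simp add: field_simps)
  have e1: "2^(N-1) * cmod z = y/2"
  proof -
    have "(2::real)^N = 2^(N-1) * 2" using NF(1) by (cases N) auto
    then show ?thesis by (simp add: y_def)
  qed
  have e2: "2^(Suc N) * cmod z = 2 * y" by (simp add: y_def)
  note kv = kap_vals[OF y]
  have znz: "z \<noteq> 0" using z by auto
  have U: "Ufam s (LP par) z =
      (if even (N-1) = par then complex_of_real (Fv (N-1)) * complex_of_real (s (y - 1)) * z^(N-1) else 0)
    + (if even N = par then complex_of_real (Fv N) * z^N else 0)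
    + (if even (Suc N) = par then complex_of_real (Fv (Suc N)) * complex_of_real (1 - s (y - 1)) * z^(Suc N) else 0)" for par
    unfolding Ufam_three[OF NF] fsum_LP e1 e2 using kv by (simp add: y_def[symmetric])
  have odd1: "even (N - 1) \<longleftrightarrow> odd N" using NF(1) by (cases N) auto
  show ?thesis
    unfolding gc_u_def Let_def N_def[symmetric] Fpow chi U
    using znz odd1 by (auto simp: algebra_simps)
qed

end


lemma wirtinger:
  assumes "\<And>v. D v = v * A + cnj v * B"
  shows "(D 1 - \<i> * D \<i>) / 2 = A" "(D 1 + \<i> * D \<i>) / 2 = B"
proof -
  have d1: "D 1 = A + B" using assms[of 1] by simp
  have di: "D \<i> = \<i> * A - \<i> * B" using assms[of \<i>] by simp
  show "(D 1 - \<i> * D \<i>) / 2 = A" unfolding d1 di by (simp add: algebra_simps complex_i_mult_minus)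
  show "(D 1 + \<i> * D \<i>) / 2 = B" unfolding d1 di by (simp add: algebra_simps complex_i_mult_minus)
qed

context sfun begin

definition A3 :: "bool \<Rightarrow> complex \<Rightarrow> nat \<Rightarrow> complex" where
  "A3 par z N = (if even (N-1) = par then alpha (N-1) z else 0) + (if even N = par then alpha N z else 0)
     + (if even (Suc N) = par then alpha (Suc N) z else 0)"

definition B3 :: "bool \<Rightarrow> complex \<Rightarrow> nat \<Rightarrow> complex" where
  "B3 par z N = (if even (N-1) = par then beta (N-1) z else 0) + (if even N = par then beta N z else 0)
     + (if even (Suc N) = par then beta (Suc N) z else 0)"

lemma dUfam_three:
  assumes NF: "1 \<le> N" "1 \<le> 2^N * cmod z" "2^N * cmod z < 2"
  shows "Ufam s (dfam v (LP par)) z = v * A3 par z N + cnj v * B3 par z N"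
  unfolding Ufam_three[OF NF] fsum_dLP A3_def B3_def by (simp add: algebra_simps)

lemma dz_comp:
  assumes z: "0 < cmod z" "cmod z < 1"
    and NF: "1 \<le> N" "1 \<le> 2^N * cmod z" "2^N * cmod z < 2"
    and hf: "\<And>w. w \<in> ball 0 1 \<Longrightarrow> f w = Ufam s (LP par) w"
  shows "dz f z = A3 par z N \<and> dzbar f z = B3 par z N"
proof -
  have znz: "z \<noteq> 0" using z by auto
  have "(f has_derivative (\<lambda>v. Ufam s (dfam v (LP par)) z)) (at z)"
    by (rule has_derivative_transform_within_open[OF Ufam_deriv[OF znz], of "ball 0 1"])
       (use z hf in auto)
  then have fd: "frechet_derivative f (at z) = (\<lambda>v. Ufam s (dfam v (LP par)) z)"
    by (rule frechet_derivative_at[symmetric])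
  have "\<And>v. frechet_derivative f (at z) v = v * A3 par z N + cnj v * B3 par z N"
    unfolding fd by (rule dUfam_three[OF NF])
  note w = wirtinger[OF this]
  show ?thesis unfolding dz_def dzbar_def using w by simp
qed

lemma alpha_N:
  assumes "1 \<le> 2^N * cmod z" "2^N * cmod z < 2"
  shows "alpha N z = complex_of_real (Fv N) * of_nat N * z^(N-1)" "beta N z = 0"
  using kap_vals[OF assms] by (simp_all add: alpha_def beta_def)

lemma beta_bound:
  assumes "z \<noteq> 0" "\<forall>x. \<bar>kap s 1 x\<bar> \<le> B1"
  shows "cmod (beta m z) \<le> Fv m * 2^m / 2 * B1 * cmod z ^ m"
proof -
  have "cmod (beta m z) = Fv m * (2^m / 2 * \<bar>kap s 1 (2^m * cmod z)\<bar> * (cmod z ^ Suc m / cmod z))"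
    by (simp add: beta_def norm_mult norm_divide norm_power Fv_def)
  also have "cmod z ^ Suc m / cmod z = cmod z ^ m" using assms(1) by simp
  finally have e: "cmod (beta m z) = Fv m * (2^m / 2 * \<bar>kap s 1 (2^m * cmod z)\<bar> * cmod z ^ m)" .
  have "Fv m * (2^m / 2 * \<bar>kap s 1 (2^m * cmod z)\<bar> * cmod z ^ m) \<le> Fv m * (2^m / 2 * B1 * cmod z ^ m)"
    using assms(2) by (intro mult_left_mono mult_right_mono) (auto simp: Fv_def)
  then show ?thesis using e by simp
qed

end


lemma Fv_lo:
  assumes "1 \<le> n"
  shows "Fv (n-1) * 2^(n-1) \<le> Fv n"
proof -
  have "(2::real)^(n-1) = 2 powr (real (n-1))" by (simp add: powr_realpow)
  then have "Fv (n-1) * 2^(n-1) = 2 powr (real (n-1) * real (n-1) / 2 + real (n-1))"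
    by (simp add: Fv_def powr_add)
  also have "\<dots> \<le> 2 powr (real n * real n / 2)"
  proof (rule powr_mono)
    have e: "real (n-1) = real n - 1" using assms by simp
    show "real (n-1) * real (n-1) / 2 + real (n-1) \<le> real n * real n / 2"
      unfolding e by (simp add: field_simps)
  qed simp
  finally show ?thesis by (simp add: Fv_def)
qed

lemma Fv_hi:
  assumes q: "0 \<le> q" "2^n * q < 2"
  shows "Fv (Suc n) * 2^(Suc n) * q^2 \<le> 16 * Fv n"
proof -
  have q2: "q^2 \<le> 2 powr (2 - 2 * real n)"
  proof -
    have "q \<le> 2 / 2^n" using q by (simp add: field_simps)
    also have "2 / 2^n = 2 powr (1 - real n)"
      by (simp add: powr_diff powr_realpow)
    finally have "q^2 \<le> (2 powr (1 - real n))^2" using q by (intro power_mono) auto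
    also have "\<dots> = 2 powr (2 - 2 * real n)" by (simp add: powr_power algebra_simps)
    finally show ?thesis .
  qed
  have p: "(2::real)^(Suc n) = 2 powr (real n + 1)"
    by (subst powr_realpow[symmetric]) (auto simp: add.commute)
  have "Fv (Suc n) * 2^(Suc n) * q^2 \<le> Fv (Suc n) * 2^(Suc n) * 2 powr (2 - 2 * real n)"
    using q2 by (intro mult_left_mono) (auto simp: Fv_def)
  also have "\<dots> = 2 powr (real (Suc n) * real (Suc n) / 2 + (real n + 1) + (2 - 2 * real n))"
    unfolding Fv_def p by (simp only: powr_add[symmetric])
  also have "\<dots> \<le> 2 powr (real n * real n / 2 + 4)"
    by (rule powr_mono) (auto simp: algebra_simps)
  also have "\<dots> = 16 * Fv n" by (simp add: Fv_def powr_add)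
  finally show ?thesis .
qed

lemma log_bd:
  assumes q: "0 < q" "q < 1" "1 \<le> 2^n * q"
  shows "0 < - log 2 q \<and> - log 2 q \<le> real n"
proof -
  have "log 2 q < 0" using q by simp
  moreover have "1 / 2^n \<le> q" using q by (simp add: field_simps)
  then have "log 2 (1 / 2^n) \<le> log 2 q" using q by simp
  then have "- real n \<le> log 2 q" by (simp add: log_divide log_nat_power)
  ultimately show ?thesis by simp
qed


theorem mainTheorem4:
  fixes s :: "real \<Rightarrow> real"
  assumes s_smooth: "smooth_on UNIV s"
    and s_zero: "\<forall>x\<in>{0..1/4}. s x = 0"
    and s_incr: "mono_on {1/4..3/4} s"
    and s_half: "s (1/2) = 1/2"
    and s_d1: "deriv s (1/2) = 2"
    and s_d2: "deriv (deriv s) (1/2) = 0"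
    and s_one: "\<forall>x\<in>{3/4..1}. s x = 1"
  defines "u \<equiv> gc_u s (\<lambda>n. 2 powr (1 - real n)) (\<lambda>n. n) (\<lambda>n. 2 powr ((real n)^2 / 2))"
  shows "smooth_on (ball 0 1) u
     \<and> (\<forall>k::nat. ((\<lambda>z. norm (u z) / cmod z ^ k) \<longlongrightarrow> 0) (at 0))
     \<and> (\<forall>z\<in>ball 0 1 - {0}. uz u z \<noteq> 0)
     \<and> (\<exists>C1>0. \<forall>z\<in>ball 0 1 - {0}.
          norm (uzbar u z) / norm (uz u z) \<le> C1 / (- log 2 (cmod z)))"
proof -
  interpret sfun s using s_smooth s_zero s_one by unfold_locales
  let ?U1 = "Ufam s (LP True)" and ?U2 = "Ufam s (LP False)"
  have ueq: "u z = (?U1 z, ?U2 z)" if "z \<in> ball 0 1" for z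
  proof (cases "z = 0")
    case True then show ?thesis by (simp add: u_def gc_u_def)
  next
    case False then show ?thesis using that gc_eq[of z] by (simp add: u_def)
  qed
  have smooth: "smooth_on (ball 0 1) u"
    unfolding smooth_on_def
  proof
    fix k
    show "Ck_on k (ball 0 1) u"
      by (rule Ck_on_transfer[OF open_ball _ Ck_on_Pair[OF Ufam_Ck[OF good_LP] Ufam_Ck[OF good_LP]]])
         (simp add: ueq)
  qed
  have flat: "((\<lambda>z. norm (u z) / cmod z ^ k) \<longlongrightarrow> 0) (at 0)" for k
  proof (rule tendsto_sandwich[where f = "\<lambda>_. 0"
        and h = "\<lambda>z. cmod (?U1 z) / cmod z ^ k + cmod (?U2 z) / cmod z ^ k"])
    show "\<forall>\<^sub>F z in at 0. 0 \<le> norm (u z) / cmod z ^ k" by simp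
    have ev: "\<forall>\<^sub>F z in at 0. z \<in> ball (0::complex) 1" by (rule eventually_at_in_open') auto
    show "\<forall>\<^sub>F z in at 0. norm (u z) / cmod z ^ k \<le> cmod (?U1 z) / cmod z ^ k + cmod (?U2 z) / cmod z ^ k"
    proof (rule eventually_mono[OF ev])
      fix z :: complex assume "z \<in> ball 0 1"
      then have "norm (u z) \<le> cmod (?U1 z) + cmod (?U2 z)" using ueq norm_Pair_le by simp
      then show "norm (u z) / cmod z ^ k \<le> cmod (?U1 z) / cmod z ^ k + cmod (?U2 z) / cmod z ^ k"
        by (simp add: add_divide_distrib[symmetric] divide_right_mono)
    qed
    show "((\<lambda>_. 0) \<longlongrightarrow> (0::real)) (at 0)" by simp
    show "((\<lambda>z. cmod (?U1 z) / cmod z ^ k + cmod (?U2 z) / cmod z ^ k) \<longlongrightarrow> 0) (at 0)"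
      using tendsto_add[OF Ufam_flat[OF good_LP] Ufam_flat[OF good_LP]] by simp
  qed
  obtain B1 where B10: "B1 \<ge> 0" and B1: "\<forall>x. \<bar>kap s 1 x\<bar> \<le> B1" using kap_bound[of 1] by blast
  have key: "uz u z \<noteq> 0 \<and> norm (uzbar u z) / norm (uz u z) \<le> (9 * B1 + 1) / (- log 2 (cmod z))"
    if zb: "z \<in> ball 0 1 - {0}" for z
  proof -
    have z: "0 < cmod z" "cmod z < 1" using zb by auto
    have znz: "z \<noteq> 0" using zb by auto
    define N where "N = annulus_idx (\<lambda>n. 2 powr (1 - real n)) z"
    have NF: "1 \<le> N" "1 \<le> 2^N * cmod z" "2^N * cmod z < 2"
      using annulus_facts[OF z] unfolding N_def by auto
    have h1: "\<And>w. w \<in> ball 0 1 \<Longrightarrow> fst (u w) = ?U1 w" using ueq by simp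
    have h2: "\<And>w. w \<in> ball 0 1 \<Longrightarrow> snd (u w) = ?U2 w" using ueq by simp
    note d1 = dz_comp[OF z NF, of "\<lambda>w. fst (u w)" True, OF h1]
    note d2 = dz_comp[OF z NF, of "\<lambda>w. snd (u w)" False, OF h2]
    have UZ: "uz u z = (A3 True z N, A3 False z N)" using d1 d2 by (simp add: uz_def)
    have UZB: "uzbar u z = (B3 True z N, B3 False z N)" using d1 d2 by (simp add: uzbar_def)
    note aN = alpha_N[OF NF(2,3)]
    have par: "even (N - 1) \<longleftrightarrow> odd N" using NF(1) by (cases N) auto
    define q where "q = cmod z"
    have q: "0 < q" "q < 1" using z by (auto simp: q_def)
    have A3e: "A3 (even N) z N = complex_of_real (Fv N) * of_nat N * z^(N-1)"
      using par by (simp add: A3_def aN)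
    have low: "Fv N * real N * q^(N-1) \<le> norm (uz u z)"
    proof -
      have "cmod (A3 (even N) z N) \<le> norm (uz u z)"
        unfolding UZ by (cases "even N") (simp_all add: norm_fst_le norm_snd_le)
      moreover have "cmod (A3 (even N) z N) = Fv N * real N * q^(N-1)"
        unfolding A3e by (simp add: norm_mult norm_power q_def Fv_def)
      ultimately show ?thesis by simp
    qed
    have pos: "0 < Fv N * real N * q^(N-1)" using NF(1) q by (simp add: Fv_def)
    have up: "norm (uzbar u z) \<le> cmod (beta (N-1) z) + cmod (beta (Suc N) z)"
    proof -
      have "norm (uzbar u z) \<le> cmod (B3 True z N) + cmod (B3 False z N)"
        unfolding UZB by (rule norm_Pair_le)
      also have "\<dots> \<le> cmod (beta (N-1) z) + cmod (beta (Suc N) z)"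
        using par aN(2) by (cases "even N") (simp_all add: B3_def norm_triangle_ineq)
      finally show ?thesis .
    qed
    have bN1: "cmod (beta (N-1) z) \<le> B1 / 2 * (Fv N * q^(N-1))"
    proof -
      have "cmod (beta (N-1) z) \<le> Fv (N-1) * 2^(N-1) / 2 * B1 * q^(N-1)"
        using beta_bound[OF znz B1, of "N - 1"] by (simp add: q_def)
      also have "\<dots> = B1 / 2 * (Fv (N-1) * 2^(N-1) * q^(N-1))" by (simp add: algebra_simps)
      also have "\<dots> \<le> B1 / 2 * (Fv N * q^(N-1))"
        using Fv_lo[OF NF(1)] B10 q by (intro mult_left_mono mult_right_mono) auto
      finally show ?thesis .
    qed
    have bN2: "cmod (beta (Suc N) z) \<le> B1 / 2 * (16 * Fv N * q^(N-1))"
    proof -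
      have "cmod (beta (Suc N) z) \<le> Fv (Suc N) * 2^(Suc N) / 2 * B1 * q^(Suc N)"
        using beta_bound[OF znz B1, of "Suc N"] by (simp add: q_def)
      also have "q^(Suc N) = q^2 * q^(N-1)"
        using NF(1) by (cases N) (auto simp: power2_eq_square)
      also have "Fv (Suc N) * 2^(Suc N) / 2 * B1 * (q^2 * q^(N-1)) = B1 / 2 * (Fv (Suc N) * 2^(Suc N) * q^2 * q^(N-1))"
        by (simp add: algebra_simps)
      also have "\<dots> \<le> B1 / 2 * (16 * Fv N * q^(N-1))"
        using Fv_hi[of q N] NF(3) q B10 by (intro mult_left_mono mult_right_mono) (auto simp: q_def)
      finally show ?thesis .
    qed
    have "norm (uzbar u z) \<le> (17 / 2 * B1) * (Fv N * q^(N-1))"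
      using up bN1 bN2 by (simp add: algebra_simps)
    then have r1: "norm (uzbar u z) / norm (uz u z) \<le> (17 / 2 * B1) * (Fv N * q^(N-1)) / (Fv N * real N * q^(N-1))"
      using low pos B10 q by (intro frac_le) (auto simp: Fv_def)
    also have "\<dots> = (17 / 2 * B1) / real N"
      using pos q NF(1) by (simp add: field_simps Fv_def)
    also have "\<dots> \<le> (9 * B1 + 1) / real N"
      using NF(1) B10 by (intro divide_right_mono) auto
    also have "\<dots> \<le> (9 * B1 + 1) / (- log 2 q)"
    proof -
      have lb: "0 < - log 2 q" "- log 2 q \<le> real N" using log_bd[OF q, of N] NF(2) by (auto simp: q_def)
      have "0 < real N * (- log 2 q)" using lb NF(1) by (intro mult_pos_pos) auto
      then show ?thesis using lb B10 by (intro divide_left_mono) auto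
    qed
    finally have ratio: "norm (uzbar u z) / norm (uz u z) \<le> (9 * B1 + 1) / (- log 2 (cmod z))"
      by (simp add: q_def)
    have "uz u z \<noteq> 0" using low pos by auto
    then show ?thesis using ratio by simp
  qed
  show ?thesis
    using smooth flat key B10
    by (intro conjI allI ballI exI[of _ "9 * B1 + 1"]) auto
qed


end
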